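(* Let $X$ be a connected weighted non-bipartite graph with vertex $u$. If $0\notin\Phi_{\mathbf e_u}(X)$, then the two copies $(0,u)$ and $(1,u)$ of $u$ in $K_2\times X$ are not sedentary. Additionally, if $A(X)$ is nonsingular, then no vertex of $K_2\times X$ is sedentary.
   Context: Graphs are simple, connected, undirected, with nonzero real edge weights; $A(X)$ is the weighted adjacency matrix, $E_\lambda$ the orthogonal projection onto its $\lambda$-eigenspace, and $\Phi_{\mathbf e_u}(X)=\{\lambda:E_\lambda\mathbf e_u\ne0\}$. The bipartite double $K_2\times X$ has vertex set $\{0,1\}\times V(X)$ and adjacency matrix $A(K_2)\otimes A(X)$. With $U(t)=e^{itA}$, a vertex $u$ is not sedentary if $\inf_{t>0}|U(t)_{u,u}|=0$ and sedentary if this infimum is positive. *)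

theory Defs
  imports "HOL-Analysis.Analysis"
begin

text \<open>Weighted graphs on a finite vertex type 'n, given by their weighted adjacency
  matrix A: symmetric, zero diagonal; u and v are adjacent iff A u v is nonzero
  (so every edge has a nonzero real weight).\<close>

definition weighted_graph :: "real^'n^'n \<Rightarrow> bool" where
  "weighted_graph A \<longleftrightarrow> transpose A = A \<and> (\<forall>x. A $ x $ x = 0)"

definition adj :: "real^'n^'n \<Rightarrow> 'n \<Rightarrow> 'n \<Rightarrow> bool" where
  "adj A x y \<longleftrightarrow> A $ x $ y \<noteq> 0"

definition connected_graph :: "real^'n^'n \<Rightarrow> bool" where
  "connected_graph A \<longleftrightarrow> (\<forall>x y. (adj A)\<^sup>*\<^sup>* x y)"

definition bipartite_graph :: "real^'n^'n \<Rightarrow> bool" where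
  "bipartite_graph A \<longleftrightarrow> (\<exists>S. \<forall>x y. adj A x y \<longrightarrow> (x \<in> S \<longleftrightarrow> y \<notin> S))"

text \<open>Standard basis vector e_u.\<close>
definition basis_vec :: "'n \<Rightarrow> real^'n" where
  "basis_vec u = (\<chi> i. if i = u then 1 else 0)"

text \<open>The lambda-eigenspace of A and the orthogonal projection E_lambda onto it
  (orthogonal projection onto a subspace = nearest point map).\<close>
definition eigenspace :: "real^'n^'n \<Rightarrow> real \<Rightarrow> (real^'n) set" where
  "eigenspace A c = {v. A *v v = c *\<^sub>R v}"

definition eigenproj :: "real^'n^'n \<Rightarrow> real \<Rightarrow> real^'n \<Rightarrow> real^'n" where
  "eigenproj A c x = closest_point (eigenspace A c) x"

text \<open>Eigenvalue support of e_u.\<close>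
definition eigsupp :: "real^'n^'n \<Rightarrow> 'n \<Rightarrow> real set" where
  "eigsupp A u = {c. eigenproj A c (basis_vec u) \<noteq> 0}"

text \<open>Kronecker product and the bipartite double K_2 x X.\<close>
definition kron :: "real^'a^'a \<Rightarrow> real^'b^'b \<Rightarrow> real^('a \<times> 'b)^('a \<times> 'b)" where
  "kron B C = (\<chi> p q. B $ fst p $ fst q * C $ snd p $ snd q)"

definition adjK2 :: "real^bool^bool" where
  "adjK2 = (\<chi> i j. if i \<noteq> j then 1 else 0)"

definition bip_double :: "real^'n^'n \<Rightarrow> real^(bool \<times> 'n)^(bool \<times> 'n)" where
  "bip_double A = kron adjK2 A"

text \<open>Transition matrix U(t) = exp(i t A), via the exponential power series.\<close>
definition transition :: "real^'n^'n \<Rightarrow> real \<Rightarrow> complex^'n^'n" where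
  "transition A t = (\<chi> x y. \<Sum>k. (\<i> * complex_of_real t) ^ k / of_nat (fact k)
                                * complex_of_real ((((**) A) ^^ k) (mat 1) $ x $ y))"

definition sedentary :: "real^'n^'n \<Rightarrow> 'n \<Rightarrow> bool" where
  "sedentary A u \<longleftrightarrow> (INF t\<in>{0<..}. cmod (transition A t $ u $ u)) > 0"

end

theory Submission
  imports Defs
begin


definition Sf :: "real \<Rightarrow> real \<Rightarrow> real" where
  "Sf a t = (if a = 0 then t else sin (a * t) / a)"

lemma Sf_deriv: "(Sf a has_real_derivative cos (a * t)) (at t)"
proof (cases "a = 0")
  case True
  then show ?thesis unfolding Sf_def by (auto intro!: derivative_eq_intros)
next
  case False
  have "((\<lambda>t. sin (a * t) / a) has_real_derivative cos (a * t)) (at t)"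
    using False by (auto intro!: derivative_eq_intros)
  then show ?thesis using False unfolding Sf_def by simp
qed

lemma Sf_bound: "a \<noteq> 0 \<Longrightarrow> \<bar>Sf a t\<bar> \<le> 1 / \<bar>a\<bar>"
  unfolding Sf_def by (simp add: abs_sin_le_one divide_right_mono abs_divide)

lemma Sf_zero: "Sf 0 t = t" unfolding Sf_def by simp
lemma Sf_at0: "Sf a 0 = 0" unfolding Sf_def by simp

lemma cos_zero_exists:
  fixes L :: "real set" and w :: "real \<Rightarrow> real"
  assumes fin: "finite L" and wnn: "\<And>m. m \<in> L \<Longrightarrow> w m \<ge> 0"
    and wnz: "\<And>m. m \<in> L \<Longrightarrow> w m > 0 \<Longrightarrow> m \<noteq> 0"
    and w1: "(\<Sum>m\<in>L. w m) = 1"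
  shows "\<exists>t>0. (\<Sum>m\<in>L. w m * cos (m * t)) = 0"
proof (rule ccontr)
  define f where "f t = (\<Sum>m\<in>L. w m * cos (m * t))" for t
  assume "\<not> ?thesis"
  then have nz: "\<And>t. t > 0 \<Longrightarrow> f t \<noteq> 0" unfolding f_def by auto
  have f0: "f 0 = 1" using w1 unfolding f_def by simp
  have cont: "isCont f x" for x unfolding f_def by (intro continuous_intros)
  have pos: "f t > 0" if "t \<ge> 0" for t
  proof (rule ccontr)
    assume "\<not> f t > 0"
    then have "f t \<le> 0" by simp
    have "\<exists>s\<ge>0. s \<le> t \<and> f s = 0"
      using IVT2[of f t 0 0] f0 \<open>t \<ge> 0\<close> cont \<open>f t \<le> 0\<close> by auto
    then obtain s where "0 \<le> s" "s \<le> t" "f s = 0" by blast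
    then show False using nz f0 by (cases "s = 0") auto
  qed
  obtain m0 where m0: "m0 \<in> L" "w m0 > 0"
  proof (rule ccontr)
    assume "\<not> thesis"
    then have "\<forall>m\<in>L. w m \<le> 0" using that by force
    then have "(\<Sum>m\<in>L. w m) \<le> 0" by (simp add: sum_nonpos)
    then show False using w1 by simp
  qed
  define c where "c = \<bar>m0\<bar>"
  have c: "c > 0" using wnz m0 c_def by auto
  define g where "g m T = Sf m T - Sf (m - c) T / 2 - Sf (m + c) T / 2" for m T
  define G where "G T = (\<Sum>m\<in>L. w m * g m T)" for T
  have G0: "G 0 = 0" unfolding G_def g_def by (simp add: Sf_at0)
  have dG: "(G has_real_derivative f t * (1 - cos (c * t))) (at t)" for t
  proof -
    have "(G has_real_derivative (\<Sum>m\<in>L. w m * (cos (m * t) - cos ((m - c) * t) / 2 - cos ((m + c) * t) / 2))) (at t)"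
      unfolding G_def g_def
      by (intro DERIV_sum DERIV_cmult DERIV_diff Sf_deriv DERIV_cdivide)
    moreover have "cos (m * t) - cos ((m - c) * t) / 2 - cos ((m + c) * t) / 2 = cos (m * t) * (1 - cos (c * t))" for m
      by (simp add: left_diff_distrib distrib_right cos_diff cos_add algebra_simps add_divide_distrib[symmetric])
    ultimately show ?thesis unfolding f_def by (simp add: sum_distrib_right mult.assoc)
  qed
  have Gnn: "G T \<ge> 0" if "T \<ge> 0" for T
  proof -
    have "G 0 \<le> G T"
    proof (rule DERIV_nonneg_imp_nondecreasing[OF that])
      fix x assume "0 \<le> x" "x \<le> T"
      moreover have "1 - cos (c * x) \<ge> 0" by simp
      ultimately have "0 \<le> f x * (1 - cos (c * x))" using pos[of x] by simp
      then show "\<exists>y. (G has_real_derivative y) (at x) \<and> 0 \<le> y"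
        using dG by blast
    qed
    then show ?thesis using G0 by simp
  qed
  define M where "M m = 1 / \<bar>m\<bar> + 1 / (2 * \<bar>m - c\<bar>) + 1 / (2 * \<bar>m + c\<bar>)" for m
  define ind where "ind m = (if \<bar>m\<bar> = c then 1 else 0 :: real)" for m
  have gb: "g m T \<le> M m - T / 2 * ind m" if "m \<noteq> 0" "T \<ge> 0" for m T
  proof -
    have b1: "Sf m T \<le> 1 / \<bar>m\<bar>" using Sf_bound[OF that(1), of T] by simp
    consider "m = c" | "m = - c" | "m \<noteq> c" "m \<noteq> -c" by blast
    then show ?thesis
    proof cases
      case 1
      have "- Sf (m + c) T \<le> 1 / \<bar>m + c\<bar>" using Sf_bound[of "m + c" T] 1 c by simp
      then show ?thesis using 1 b1 c unfolding g_def M_def ind_def by (simp add: Sf_zero)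
    next
      case 2
      have "- Sf (m - c) T \<le> 1 / \<bar>m - c\<bar>" using Sf_bound[of "m - c" T] 2 c by simp
      then show ?thesis using 2 b1 c unfolding g_def M_def ind_def by (simp add: Sf_zero)
    next
      case 3
      have "- Sf (m + c) T \<le> 1 / \<bar>m + c\<bar>" using Sf_bound[of "m + c" T] 3 c by simp
      moreover have "- Sf (m - c) T \<le> 1 / \<bar>m - c\<bar>" using Sf_bound[of "m - c" T] 3 c by simp
      moreover have "\<bar>m\<bar> \<noteq> c" using 3 by auto
      ultimately show ?thesis using b1 unfolding g_def M_def ind_def by simp
    qed
  qed
  define K where "K = (\<Sum>m\<in>L. w m * M m)"
  have Kn: "K \<ge> 0" unfolding K_def M_def using wnn by (intro sum_nonneg) simp
  have Gb: "G T \<le> K - T / 2 * w m0" if "T \<ge> 0" for T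
  proof -
    have "G T \<le> (\<Sum>m\<in>L. w m * (M m - T / 2 * ind m))"
      unfolding G_def
    proof (rule sum_mono)
      fix m assume mL: "m \<in> L"
      show "w m * g m T \<le> w m * (M m - T / 2 * ind m)"
      proof (cases "w m > 0")
        case True
        then show ?thesis using gb[OF wnz[OF mL True] that] by simp
      next
        case False
        then have "w m = 0" using wnn[OF mL] by simp
        then show ?thesis by simp
      qed
    qed
    also have "\<dots> = K - T / 2 * (\<Sum>m\<in>L. w m * ind m)"
      unfolding K_def by (simp add: algebra_simps sum_subtractf sum_distrib_left)
    also have "(\<Sum>m\<in>L. w m * ind m) \<ge> w m0 * ind m0"
      using fin m0 wnn unfolding ind_def by (intro member_le_sum) auto
    then have "K - T / 2 * (\<Sum>m\<in>L. w m * ind m) \<le> K - T / 2 * (w m0 * ind m0)"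
      using that by (intro diff_left_mono mult_left_mono) auto
    finally show ?thesis unfolding ind_def c_def by simp
  qed
  define T where "T = 2 * (K + 1) / w m0"
  have T0: "T \<ge> 0" unfolding T_def using Kn m0 by simp
  have "T / 2 * w m0 = K + 1" unfolding T_def using m0 by simp
  then have "G T \<le> -1" using Gb[OF T0] by linarith
  then show False using Gnn[OF T0] by simp
qed



lemma sym_inner:
  fixes A :: "real^'n^'n"
  assumes "transpose A = A"
  shows "inner (A *v x) y = inner x (A *v y)"
proof -
  have "A *v x = x v* A" using transpose_matrix_vector[of A x] assms by simp
  then show ?thesis by (simp add: dot_lmul_matrix)
qed

lemma eig_subspace: "subspace {v. (A::real^'n^'n) *v v = m *\<^sub>R v}"
  unfolding subspace_def
  by (auto simp: matrix_vector_right_distrib matrix_vector_mult_scaleR scaleR_right_distrib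
      matrix_vector_mult_0_right algebra_simps)

lemma cont_q: "continuous_on S (\<lambda>x. inner ((A::real^'n^'n) *v x) x)"
  by (intro continuous_intros)



lemma eig_in_inv_subspace:
  fixes A :: "real^'n^'n"
  assumes sym: "transpose A = A" and W: "subspace W" "closed W"
    and inv: "\<And>x. x \<in> W \<Longrightarrow> A *v x \<in> W" and z: "z \<in> W" "z \<noteq> 0"
  shows "\<exists>x\<in>W. x \<noteq> 0 \<and> (\<exists>m. A *v x = m *\<^sub>R x)"
proof -
  define q where "q x = inner (A *v x) x" for x
  define K where "K = W \<inter> sphere 0 1"
  have Kc: "compact K" unfolding K_def using W(2) by (intro closed_Int_compact) auto
  have "z /\<^sub>R norm z \<in> K" unfolding K_def using z W(1) by (auto simp: subspace_scale)
  then have Kne: "K \<noteq> {}" by auto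
  have "continuous_on K q" unfolding q_def by (intro continuous_intros)
  then obtain x where xK: "x \<in> K" and xmax: "\<And>y. y \<in> K \<Longrightarrow> q y \<le> q x"
    using continuous_attains_sup[OF Kc Kne] by blast
  define m where "m = q x"
  have xW: "x \<in> W" and nx: "norm x = 1" using xK unfolding K_def by auto
  have qhom: "q (c *\<^sub>R y) = c^2 * q y" for c y
    unfolding q_def by (simp add: matrix_vector_mult_scaleR power2_eq_square)
  have bound: "q y \<le> m * (inner y y)" if "y \<in> W" for y
  proof (cases "y = 0")
    case True then show ?thesis unfolding q_def by simp
  next
    case False
    have "y /\<^sub>R norm y \<in> K" unfolding K_def using that False W(1) by (auto simp: subspace_scale)
    then have "q (y /\<^sub>R norm y) \<le> m" using xmax m_def by simp
    then have "q y / (norm y)^2 \<le> m" using qhom[of "inverse (norm y)" y]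
      by (simp add: power_inverse divide_inverse mult.commute)
    then have "q y \<le> m * (norm y)^2" using False by (simp add: divide_le_eq mult.commute)
    then show ?thesis by (simp add: power2_norm_eq_inner)
  qed
  define y where "y = A *v x - m *\<^sub>R x"
  have yW: "y \<in> W" unfolding y_def using inv[OF xW] xW W(1) by (simp add: subspace_diff subspace_scale)
  have xx: "inner x x = 1" using nx by (simp add: power2_norm_eq_inner[symmetric])
  have key: "0 \<le> -2 * s * inner y y + s^2 * (m * inner y y - q y)" for s
  proof -
    have "x + s *\<^sub>R y \<in> W" using xW yW W(1) by (simp add: subspace_add subspace_scale)
    from bound[OF this] have "q (x + s *\<^sub>R y) \<le> m * inner (x + s *\<^sub>R y) (x + s *\<^sub>R y)" .
    moreover have "q (x + s *\<^sub>R y) = q x + 2 * s * inner (A *v x) y + s^2 * q y"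
      unfolding q_def using sym_inner[OF sym, of y x]
      by (simp add: matrix_vector_right_distrib matrix_vector_mult_scaleR inner_add_left inner_add_right
          power2_eq_square algebra_simps inner_commute)
    moreover have "inner (x + s *\<^sub>R y) (x + s *\<^sub>R y) = 1 + 2 * s * inner x y + s^2 * inner y y"
      using xx by (simp add: inner_add_left inner_add_right power2_eq_square algebra_simps inner_commute)
    moreover have "inner (A *v x) y = inner y y + m * inner x y"
      unfolding y_def by (simp add: inner_diff_left inner_diff_right algebra_simps inner_commute) 
    ultimately show ?thesis unfolding m_def using xx by (simp add: algebra_simps power2_eq_square inner_commute[of y x])
  qed
  have "y = 0"
  proof (rule ccontr)
    assume "y \<noteq> 0"
    then have a: "inner y y > 0" by simp
    define C where "C = m * inner y y - q y"
    define s where "s = inner y y / (\<bar>C\<bar> + 1)"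
    have s: "s > 0" unfolding s_def using a by simp
    have "0 \<le> -2 * s * inner y y + s^2 * C" using key[of s] C_def by simp
    then have "2 * s * inner y y \<le> s * (s * C)" by (simp add: power2_eq_square algebra_simps)
    then have "2 * inner y y \<le> s * C" using s by simp
    moreover have "s * C \<le> s * \<bar>C\<bar>" using s by (simp add: mult_left_mono)
    moreover have "s * \<bar>C\<bar> < inner y y" unfolding s_def using a
      by (simp add: field_simps)
    ultimately show False using a by simp
  qed
  then have "A *v x = m *\<^sub>R x" unfolding y_def by simp
  moreover have "x \<noteq> 0" using nx by auto
  ultimately show ?thesis using xW by blast
qed

lemma span_eigvecs:
  fixes A :: "real^'n^'n"
  assumes sym: "transpose A = A"
  shows "span {v. \<exists>m. A *v v = m *\<^sub>R v} = UNIV"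
proof -
  define E where "E = {v. \<exists>m. A *v v = m *\<^sub>R v}"
  have Einv: "A *v v \<in> E" if "v \<in> E" for v
    using that unfolding E_def by (auto simp: matrix_vector_mult_scaleR)
  have spinv: "A *v v \<in> span E" if "v \<in> span E" for v
  proof -
    have "(\<lambda>x. A *v x) ` span E = span ((\<lambda>x. A *v x) ` E)"
      by (simp add: span_linear_image matrix_vector_mul_linear)
    also have "\<dots> \<subseteq> span E" using Einv by (intro span_mono) auto
    finally show ?thesis using that by auto
  qed
  define W where "W = (\<Inter>w\<in>span E. {x. inner w x = 0})"
  have Wsub: "subspace W" unfolding W_def subspace_def
    by (auto simp: inner_add_right)
  have Wcl: "closed W" unfolding W_def by (intro closed_INT) (auto intro: closed_hyperplane)
  have Winv: "A *v x \<in> W" if "x \<in> W" for x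
  proof -
    have "inner w (A *v x) = 0" if "w \<in> span E" for w
    proof -
      have "inner w (A *v x) = inner (A *v w) x" using sym_inner[OF sym, of w x] by simp
      also have "\<dots> = 0" using spinv[OF that] \<open>x \<in> W\<close> unfolding W_def by auto
      finally show ?thesis .
    qed
    then show ?thesis unfolding W_def by auto
  qed
  have "x \<in> span E" for x
  proof -
    obtain y z where y: "y \<in> span E" and zo: "\<And>w. w \<in> span E \<Longrightarrow> orthogonal z w" and xe: "x = y + z"
      using orthogonal_subspace_decomp_exists[of E x] by blast
    have zW: "z \<in> W" unfolding W_def using zo by (auto simp: orthogonal_def inner_commute)
    have "z = 0"
    proof (rule ccontr)
      assume "z \<noteq> 0"
      then obtain v where vW: "v \<in> W" and v0: "v \<noteq> 0" and "\<exists>m. A *v v = m *\<^sub>R v"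
        using eig_in_inv_subspace[OF sym Wsub Wcl Winv zW] by blast
      then have "v \<in> span E" unfolding E_def by (auto intro: span_base)
      then have "inner v v = 0" using vW unfolding W_def by auto
      then show False using v0 by simp
    qed
    then show ?thesis using y xe by simp
  qed
  then show ?thesis unfolding E_def by auto
qed



definition Apow :: "real^'n^'n \<Rightarrow> nat \<Rightarrow> real^'n^'n" where
  "Apow A k = (((**) A) ^^ k) (mat 1)"

lemma Apow_Suc: "Apow A (Suc k) = A ** Apow A k"
  unfolding Apow_def by simp

lemma Apow_eig: "A *v v = m *\<^sub>R v \<Longrightarrow> Apow A k *v v = m^k *\<^sub>R v"
proof (induction k)
  case 0 then show ?case by (simp add: Apow_def)
next
  case (Suc k)
  have "Apow A (Suc k) *v v = A *v (Apow A k *v v)"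
    by (simp add: Apow_Suc matrix_vector_mul_assoc)
  also have "\<dots> = m^k *\<^sub>R (A *v v)" using Suc by (simp add: matrix_vector_mult_scaleR)
  also have "\<dots> = m^(Suc k) *\<^sub>R v" using Suc.prems by simp
  finally show ?case .
qed

lemma entry_inner: "(M::real^'n^'n) $ u $ u = inner (M *v basis_vec u) (basis_vec u)"
  unfolding inner_vec_def matrix_vector_mult_def basis_vec_def
  by (simp add: if_distrib cong: if_cong)

lemma spectral_moments:
  fixes A :: "real^'n^'n" and u :: 'n
  assumes sym: "transpose A = A"
    and hyp: "\<And>v. A *v v = 0 \<Longrightarrow> inner (basis_vec u) v = 0"
  shows "\<exists>L w. finite L \<and> (\<forall>m\<in>L. w m \<ge> 0) \<and> (\<forall>m\<in>L. w m > 0 \<longrightarrow> m \<noteq> 0)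
          \<and> (\<forall>k. Apow A k $ u $ u = (\<Sum>m\<in>L. w m * m^k))"
proof -
  define e where "e = basis_vec u"
  define E where "E = {v. \<exists>m. A *v v = m *\<^sub>R v}"
  have "e \<in> span E" using span_eigvecs[OF sym] unfolding E_def by simp
  then obtain S c where S: "finite S" "S \<subseteq> E" and eS: "(\<Sum>v\<in>S. c v *\<^sub>R v) = e"
    unfolding span_explicit by blast
  define ev where "ev v = (SOME m. A *v v = m *\<^sub>R v)" for v
  have evS: "A *v v = ev v *\<^sub>R v" if "v \<in> S" for v
    using that S(2) unfolding E_def ev_def by (auto intro: someI_ex)
  define L where "L = ev ` S"
  define x where "x m = (\<Sum>v\<in>{v\<in>S. ev v = m}. c v *\<^sub>R v)" for m
  have finL: "finite L" unfolding L_def using S by simp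
  have esum: "e = (\<Sum>m\<in>L. x m)"
    unfolding L_def x_def eS[symmetric] using sum.image_gen[OF S(1), of "\<lambda>v. c v *\<^sub>R v" ev] by simp
  have xeig: "A *v x m = m *\<^sub>R x m" for m
  proof -
    have "x m \<in> {v. A *v v = m *\<^sub>R v}" unfolding x_def
      by (intro subspace_sum[OF eig_subspace] subspace_scale[OF eig_subspace]) (auto simp: evS)
    then show ?thesis by simp
  qed
  have orth: "inner (x m) (x m') = 0" if "m \<noteq> m'" for m m'
  proof -
    have "m * inner (x m) (x m') = inner (A *v x m) (x m')" by (simp add: xeig)
    also have "\<dots> = inner (x m) (A *v x m')" by (rule sym_inner[OF sym])
    also have "\<dots> = m' * inner (x m) (x m')" by (simp add: xeig)
    finally show ?thesis using that by simp
  qed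
  define w where "w m = inner (x m) (x m)" for m
  have xe: "inner (x m) e = w m" if "m \<in> L" for m
  proof -
    have "inner (x m) e = (\<Sum>m'\<in>L. inner (x m) (x m'))" unfolding esum by (simp add: inner_sum_right)
    also have "\<dots> = (\<Sum>m'\<in>L. if m' = m then w m else 0)"
      using orth unfolding w_def by (intro sum.cong) auto
    also have "\<dots> = w m" using that finL by simp
    finally show ?thesis .
  qed
  have mom: "Apow A k $ u $ u = (\<Sum>m\<in>L. w m * m^k)" for k
  proof -
    have "Apow A k $ u $ u = inner (Apow A k *v e) e" unfolding e_def by (rule entry_inner)
    also have "\<dots> = (\<Sum>m\<in>L. inner (Apow A k *v x m) e)"
      unfolding esum[of] using linear_sum[OF matrix_vector_mul_linear[of "Apow A k"], of x L] by (simp add: inner_sum_left o_def)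
    also have "\<dots> = (\<Sum>m\<in>L. w m * m^k)"
      by (intro sum.cong refl) (simp add: Apow_eig[OF xeig] xe)
    finally show ?thesis .
  qed
  have wnz: "m \<noteq> 0" if "m \<in> L" "w m > 0" for m
  proof
    assume "m = 0"
    then have "A *v x m = 0" using xeig by simp
    then have "inner e (x m) = 0" using hyp unfolding e_def by blast
    then have "w m = 0" using xe[OF that(1)] by (simp add: inner_commute)
    then show False using that by simp
  qed
  show ?thesis
    by (intro exI[of _ L] exI[of _ w]) (auto simp: finL w_def mom wnz)
qed



lemma kron_mult: "kron P Q ** kron R S = kron (P ** R) (Q ** S)"
proof -
  have "(\<Sum>r\<in>UNIV. P $ a $ fst r * Q $ b $ snd r * (R $ fst r $ c * S $ snd r $ d))
      = (\<Sum>r1\<in>UNIV. P $ a $ r1 * R $ r1 $ c) * (\<Sum>r2\<in>UNIV. Q $ b $ r2 * S $ r2 $ d)"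
    for a b c d
  proof -
    have "(\<Sum>r\<in>UNIV. P $ a $ fst r * Q $ b $ snd r * (R $ fst r $ c * S $ snd r $ d))
        = (\<Sum>r\<in>UNIV \<times> UNIV. P $ a $ fst r * Q $ b $ snd r * (R $ fst r $ c * S $ snd r $ d))"
      by (simp add: UNIV_Times_UNIV)
    also have "\<dots> = (\<Sum>r1\<in>UNIV. \<Sum>r2\<in>UNIV. P $ a $ r1 * Q $ b $ r2 * (R $ r1 $ c * S $ r2 $ d))"
      using sum.cartesian_product[of "\<lambda>r1 r2. P $ a $ r1 * Q $ b $ r2 * (R $ r1 $ c * S $ r2 $ d)" UNIV UNIV]
      by (simp add: case_prod_beta)
    also have "\<dots> = (\<Sum>r1\<in>UNIV. P $ a $ r1 * R $ r1 $ c) * (\<Sum>r2\<in>UNIV. Q $ b $ r2 * S $ r2 $ d)"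
      by (simp add: sum_product algebra_simps)
    finally show ?thesis .
  qed
  then show ?thesis unfolding kron_def matrix_matrix_mult_def by (simp add: vec_eq_iff)
qed

lemma kron_one: "kron (mat 1) (mat 1) = mat 1"
  unfolding kron_def mat_def by (simp add: vec_eq_iff prod_eq_iff)

lemma adjK2_sq: "adjK2 ** adjK2 = mat 1"
  unfolding adjK2_def matrix_matrix_mult_def mat_def by (simp add: vec_eq_iff UNIV_bool)

lemma Apow_adjK2: "Apow adjK2 k = (if even k then mat 1 else adjK2)"
proof (induction k)
  case 0 then show ?case by (simp add: Apow_def)
next
  case (Suc k) then show ?case by (simp add: Apow_Suc adjK2_sq)
qed

lemma Apow_bip: "Apow (bip_double A) k = kron (Apow adjK2 k) (Apow A k)"
proof (induction k)
  case 0 then show ?case by (simp add: Apow_def kron_one)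
next
  case (Suc k) then show ?case by (simp add: Apow_Suc bip_double_def kron_mult)
qed

lemma Apow_bip_diag:
  "Apow (bip_double A) k $ (b, u) $ (b, u) = (if even k then Apow A k $ u $ u else 0)"
proof -
  have "adjK2 $ b $ b = 0" by (simp add: adjK2_def)
  then show ?thesis by (simp add: Apow_bip Apow_adjK2 kron_def mat_def)
qed

lemma transition_diag:
  fixes A :: "real^'n^'n"
  assumes fin: "finite L"
    and mom: "\<And>k. Apow A k $ u $ u = (\<Sum>m\<in>L. w m * m^k)"
  shows "transition (bip_double A) t $ (b, u) $ (b, u) = complex_of_real (\<Sum>m\<in>L. w m * cos (m * t))"
proof -
  have termeq: "(\<i> * complex_of_real t) ^ n / of_nat (fact n) * complex_of_real (Apow (bip_double A) n $ (b, u) $ (b, u))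
      = complex_of_real (\<Sum>m\<in>L. w m * (cos_coeff n * (m * t) ^ n))" for n
  proof (cases "even n")
    case True
    then obtain j where n: "n = 2 * j" by (auto elim: evenE)
    have ip: "(\<i> * complex_of_real t) ^ n = complex_of_real ((-1)^j * t^n)"
      unfolding n by (simp add: power_mult power_mult_distrib power_minus[of "(complex_of_real t)\<^sup>2" j])
    have "(\<Sum>m\<in>L. w m * (cos_coeff n * (m * t) ^ n)) = (-1)^j * t^n / fact n * (\<Sum>m\<in>L. w m * m^n)"
      unfolding cos_coeff_def using True n
      by (simp add: sum_distrib_left power_mult_distrib algebra_simps sum_divide_distrib)
    then show ?thesis using True
      by (simp add: Apow_bip_diag mom ip)
  next
    case False
    then show ?thesis by (simp add: Apow_bip_diag cos_coeff_def)
  qed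
  have "(\<lambda>n. \<Sum>m\<in>L. w m * (cos_coeff n * (m * t) ^ n)) sums (\<Sum>m\<in>L. w m * cos (m * t))"
    by (intro sums_sum sums_mult) (use cos_converges[where ?x = "_ :: real"] in simp)
  then have "(\<lambda>n. complex_of_real (\<Sum>m\<in>L. w m * (cos_coeff n * (m * t) ^ n))) sums complex_of_real (\<Sum>m\<in>L. w m * cos (m * t))"
    by (rule sums_of_real)
  then have "(\<lambda>n. (\<i> * complex_of_real t) ^ n / of_nat (fact n) * complex_of_real (Apow (bip_double A) n $ (b, u) $ (b, u)))
      sums complex_of_real (\<Sum>m\<in>L. w m * cos (m * t))"
    by (simp only: termeq)
  then show ?thesis unfolding transition_def Apow_def[symmetric] by (simp add: sums_iff)
qed



lemma not_sed:
  fixes A :: "real^'n^'n" and u :: 'n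
  assumes sym: "transpose A = A" and h: "0 \<notin> eigsupp A u"
  shows "\<not> sedentary (bip_double A) (b, u)"
proof -
  define e where "e = basis_vec u"
  define S where "S = eigenspace A 0"
  have Ssub: "subspace S" unfolding S_def eigenspace_def using eig_subspace[of A 0] by simp
  have cp: "closest_point S e = 0" using h unfolding eigsupp_def eigenproj_def S_def e_def by simp
  have hyp: "inner (basis_vec u) v = 0" if "A *v v = 0" for v
  proof -
    have v1: "v \<in> S" using that unfolding S_def eigenspace_def by simp
    have vS: "v \<in> S" "-v \<in> S" using v1 subspace_neg[OF Ssub v1] by auto
    have c: "convex S" "closed S" using Ssub by (auto simp: subspace_imp_convex closed_subspace)
    have "inner e v \<le> 0" using closest_point_dot[OF c vS(1), of e] cp by simp
    moreover have "inner e (-v) \<le> 0" using closest_point_dot[OF c vS(2), of e] cp by simp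
    ultimately show ?thesis unfolding e_def by simp
  qed
  obtain L w where fin: "finite L" and wnn: "\<forall>m\<in>L. w m \<ge> 0" and wnz: "\<forall>m\<in>L. w m > 0 \<longrightarrow> m \<noteq> 0"
    and mom: "\<forall>k. Apow A k $ u $ u = (\<Sum>m\<in>L. w m * m^k)"
    using spectral_moments[OF sym hyp] by blast
  have "(\<Sum>m\<in>L. w m) = 1" using mom[rule_format, of 0] by (simp add: Apow_def mat_def)
  then obtain t0 where t0: "t0 > 0" "(\<Sum>m\<in>L. w m * cos (m * t0)) = 0"
    using cos_zero_exists[OF fin] wnn wnz by blast
  have tr: "transition (bip_double A) t $ (b, u) $ (b, u) = complex_of_real (\<Sum>m\<in>L. w m * cos (m * t))" for t
    using transition_diag[OF fin] mom by blast
  have "(INF t\<in>{0<..}. cmod (transition (bip_double A) t $ (b, u) $ (b, u))) \<le> cmod (transition (bip_double A) t0 $ (b, u) $ (b, u))"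
    by (rule cINF_lower) (auto intro: bdd_belowI[of _ 0] simp: t0)
  also have "\<dots> = 0" using tr[of t0] t0 by simp
  finally show ?thesis unfolding sedentary_def by simp
qed

theorem theorem30:
  fixes A :: "real^'n^'n" and u :: 'n
  assumes "weighted_graph A"
    and "connected_graph A"
    and "\<not> bipartite_graph A"
  shows "(0 \<notin> eigsupp A u \<longrightarrow>
            \<not> sedentary (bip_double A) (False, u) \<and> \<not> sedentary (bip_double A) (True, u))
       \<and> (invertible A \<longrightarrow> (\<forall>v. \<not> sedentary (bip_double A) v))"
proof -
  have sym: "transpose A = A" using assms(1) unfolding weighted_graph_def by simp
  have part2: "\<not> sedentary (bip_double A) v" if inv: "invertible A" for v
  proof -
    obtain b x where v: "v = (b, x)" by (cases v)
    have ker: "eigenspace A 0 = {0}"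
    proof -
      have "\<exists>B. B ** A = mat 1" using inv unfolding invertible_def by blast
      then have "\<forall>y. A *v y = 0 \<longrightarrow> y = 0" using matrix_left_invertible_ker by blast
      then show ?thesis unfolding eigenspace_def by auto
    qed
    have "closest_point {0} (basis_vec x) \<in> {0::real^'n}"
      by (rule closest_point_in_set) auto
    then have "0 \<notin> eigsupp A x" unfolding eigsupp_def eigenproj_def using ker by simp
    then show ?thesis using not_sed[OF sym] v by blast
  qed
  show ?thesis using not_sed[OF sym] part2 by blast
qed


end
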